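(* Let $D:\mathbb R^2\setminus\{0\}\to\mathbb R$ be nonnegative, bounded and continuously differentiable, and consider $\ddot x+D(x)\dot x=-x/|x|^3$. Every rectilinear solution $x_*:[-T,0]\to\mathbb R^2\setminus\{0\}$ of this equation is nondegenerate.
   Context: A solution is rectilinear if it has the form $x_*(t)=r_*(t)w_0$ with $w_0$ a fixed unit vector and $r_*>0$. A solution $x_*:[-T,0]\to\mathbb R^2\setminus\{0\}$ is called nondegenerate if the only solution $w:[-T,0]\to\mathbb R^2$ of the variational equation $$\ddot w+\langle\nabla D(x_*(t)),w\rangle\dot x_*(t)+D(x_*(t))\dot w=-\frac{1}{|x_*(t)|^3}w+3\frac{\langle x_*(t),w\rangle}{|x_*(t)|^5}x_*(t)$$ with $w(-T)=0=w(0)$ is $w\equiv0$. *)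

theory Defs
  imports "HOL-Analysis.Analysis"
begin

definition kepler_solution ::
  "(real^2 \<Rightarrow> real) \<Rightarrow> real \<Rightarrow> (real \<Rightarrow> real^2) \<Rightarrow> (real \<Rightarrow> real^2) \<Rightarrow> (real \<Rightarrow> real^2) \<Rightarrow> bool"
where
  "kepler_solution D T x x' x'' \<longleftrightarrow>
     (\<forall>t\<in>{-T..0}.
        x t \<noteq> 0 \<and>
        (x has_vector_derivative x' t) (at t within {-T..0}) \<and>
        (x' has_vector_derivative x'' t) (at t within {-T..0}) \<and>
        x'' t + D (x t) *\<^sub>R x' t = - (1 / norm (x t) ^ 3) *\<^sub>R x t)"

definition rectilinear :: "real \<Rightarrow> (real \<Rightarrow> real^2) \<Rightarrow> bool" where
  "rectilinear T x \<longleftrightarrow>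
     (\<exists>w0 r. norm w0 = 1 \<and> (\<forall>t\<in>{-T..0}. r t > 0 \<and> x t = r t *\<^sub>R w0))"

text \<open>Nondegeneracy: the only solution of the variational equation along x
  (with x' the velocity of x and gradD the gradient of D) vanishing at -T and 0 is zero.\<close>

definition nondegenerate ::
  "(real^2 \<Rightarrow> real) \<Rightarrow> (real^2 \<Rightarrow> real^2) \<Rightarrow> real \<Rightarrow> (real \<Rightarrow> real^2) \<Rightarrow> (real \<Rightarrow> real^2) \<Rightarrow> bool"
where
  "nondegenerate D gradD T x x' \<longleftrightarrow>
     (\<forall>w w' w''.
        (\<forall>t\<in>{-T..0}.
           (w has_vector_derivative w' t) (at t within {-T..0}) \<and>
           (w' has_vector_derivative w'' t) (at t within {-T..0}) \<and>
           w'' t + (gradD (x t) \<bullet> w t) *\<^sub>R x' t + D (x t) *\<^sub>R w' t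
             = - (1 / norm (x t) ^ 3) *\<^sub>R w t
               + (3 * (x t \<bullet> w t) / norm (x t) ^ 5) *\<^sub>R x t)
        \<and> w (-T) = 0 \<and> w 0 = 0
        \<longrightarrow> (\<forall>t\<in>{-T..0}. w t = 0))"

end

theory Submission
  imports Defs
begin

lemma mvt_h:
  fixes f f' :: "real \<Rightarrow> real"
  assumes "a < b" "{a..b} \<subseteq> S" "\<forall>t\<in>S. (f has_field_derivative f' t) (at t within S)"
  shows "\<exists>\<xi>\<in>{a<..<b}. f b - f a = f' \<xi> * (b - a)"
proof -
  have "\<And>x. a \<le> x \<Longrightarrow> x \<le> b \<Longrightarrow> (f has_derivative (\<lambda>h. f' x * h)) (at x within {a..b})"
    using assms(2,3) by (metis atLeastAtMost_iff has_field_derivative_def has_field_derivative_subset subsetD)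
  from mvt_simple[OF assms(1) this] show ?thesis by auto
qed

lemma fermat_h:
  fixes f :: "real \<Rightarrow> real"
  assumes "l < t" "t < u" "(f has_field_derivative f') (at t within {l..u})"
    "\<forall>y\<in>{l..u}. f y \<le> f t"
  shows "f' = 0"
proof -
  have "DERIV f t :> f'" using assms(3) at_within_Icc_at[OF assms(1,2)] by simp
  moreover have "0 < min (t - l) (u - t)" using assms by simp
  moreover have "\<forall>y. \<bar>t - y\<bar> < min (t - l) (u - t) \<longrightarrow> f y \<le> f t"
  proof (intro allI impI)
    fix y assume "\<bar>t - y\<bar> < min (t - l) (u - t)"
    hence "y \<in> {l..u}" by (auto simp: abs_if split: if_splits)
    thus "f y \<le> f t" using assms(4) by blast
  qed
  ultimately show ?thesis by (rule DERIV_local_max)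
qed

lemma lemB:
  fixes c cd q d s :: "real \<Rightarrow> real"
  assumes T: "T > 0"
  and dc: "\<forall>t\<in>{-T..0}. (c has_field_derivative cd t) (at t within {-T..0})"
  and dq: "\<forall>t\<in>{-T..0}. (q has_field_derivative (- d t * q t)) (at t within {-T..0})"
  and d: "\<forall>t\<in>{-T..0}. d t \<ge> 0"
  and qs: "\<forall>t\<in>{-T..0}. q t = s t * cd t" and s: "\<forall>t\<in>{-T..0}. s t > 0"
  and c0: "c (-T) = 0" "c 0 = 0"
  shows "\<forall>t\<in>{-T..0}. c t \<le> 0"
proof (rule ccontr)
  assume "\<not> ?thesis"
  then obtain t0 where t0: "t0 \<in> {-T..0}" "c t0 > 0" by force
  have "continuous_on {-T..0} c" using dc by (intro DERIV_continuous_on) auto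
  then obtain tm where tm: "tm \<in> {-T..0}" "\<forall>y\<in>{-T..0}. c y \<le> c tm"
    using continuous_attains_sup[of "{-T..0}" c] T by auto
  have ctm: "c tm > 0" using tm t0 by force
  hence tmi: "-T < tm" "tm < 0" using tm c0 by (auto simp: less_le)
  have "cd tm = 0" using fermat_h[OF tmi, of c "cd tm"] dc tm by auto
  hence qtm: "q tm = 0" using qs tm by auto
  have q0: "q t = 0" if "t \<in> {tm..0}" for t
  proof (cases "t = tm")
    case True then show ?thesis using qtm by simp
  next
    case False
    hence "tm < t" using that by auto
    have "\<forall>x\<in>{-T..0}. ((\<lambda>t. q t * q t) has_field_derivative (- d x * q x) * q x + (- d x * q x) * q x) (at x within {-T..0})"
      using dq by (intro ballI DERIV_mult) auto
    from mvt_h[OF \<open>tm < t\<close> _ this] that tm obtain \<xi> where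
      "\<xi> \<in> {tm<..<t}" "q t * q t - q tm * q tm = ((- d \<xi> * q \<xi>) * q \<xi> + (- d \<xi> * q \<xi>) * q \<xi>) * (t - tm)"
      by auto
    moreover have "d \<xi> * (q \<xi> * q \<xi>) \<ge> 0" using d \<open>\<xi> \<in> _\<close> tm that by auto
    ultimately have "q t * q t = - (2 * (d \<xi> * (q \<xi> * q \<xi>))) * (t - tm)"
      using qtm by (simp add: algebra_simps)
    moreover have "- (2 * (d \<xi> * (q \<xi> * q \<xi>))) * (t - tm) \<le> 0"
      using \<open>d \<xi> * (q \<xi> * q \<xi>) \<ge> 0\<close> \<open>tm < t\<close> by (intro mult_nonpos_nonneg) auto
    ultimately have "q t * q t \<le> 0" by simp
    thus ?thesis by (metis mult_eq_0_iff not_square_less_zero order_le_less)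
  qed
  have "cd t = 0" if "t \<in> {tm..0}" for t using q0[OF that] qs s that tm
    by (metis atLeastAtMost_iff mult_eq_0_iff order_trans less_irrefl)
  from mvt_h[of tm 0 "{-T..0}" c cd] tmi tm dc this obtain \<xi> where
    "\<xi> \<in> {tm<..<0}" "c 0 - c tm = cd \<xi> * (0 - tm)" by auto
  with \<open>\<And>t. t \<in> {tm..0} \<Longrightarrow> cd t = 0\<close> have "c tm = c 0" by auto
  thus False using c0 ctm by simp
qed

lemma lemA:
  fixes a ad d k :: "real \<Rightarrow> real" and M :: real
  assumes T: "T > 0"
  and da: "\<forall>t\<in>{-T..0}. (a has_field_derivative ad t) (at t within {-T..0})"
  and dp: "\<forall>t\<in>{-T..0}. ((\<lambda>t. ad t + d t * a t) has_field_derivative k t * a t) (at t within {-T..0})"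
  and d: "\<forall>t\<in>{-T..0}. 0 \<le> d t \<and> d t \<le> M"
  and k: "\<forall>t\<in>{-T..0}. k t > 0"
  and a0: "a (-T) = 0" "a 0 = 0"
  shows "\<forall>t\<in>{-T..0}. a t \<le> 0"
proof (rule ccontr)
  assume "\<not> ?thesis"
  then obtain t0 where t0: "t0 \<in> {-T..0}" "a t0 > 0" by force
  have conta: "continuous_on {-T..0} a" using da by (intro DERIV_continuous_on) auto
  then obtain tm where tm: "tm \<in> {-T..0}" "\<forall>y\<in>{-T..0}. a y \<le> a tm"
    using continuous_attains_sup[of "{-T..0}" a] T by auto
  have atm: "a tm > 0" using tm t0 by force
  hence tmi: "-T < tm" "tm < 0" using tm a0 by (auto simp: less_le)
  have "ad tm = 0" using fermat_h[OF tmi, of a "ad tm"] da tm by auto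
  hence ptm: "ad tm + d tm * a tm \<ge> 0" using d tm atm by auto
  define S where "S = {t \<in> {tm..0}. a t \<le> 0}"
  have "closed S" unfolding S_def
    by (rule continuous_on_closed_Collect_le) (use conta tm in \<open>auto intro: continuous_on_subset\<close>)
  moreover have "S \<noteq> {}" using a0 tmi unfolding S_def by auto
  moreover have "bdd_below S" unfolding S_def by (auto intro: bdd_belowI[of _ tm])
  ultimately have bS: "Inf S \<in> S" by (rule closed_contains_Inf[rotated -1])
  define \<beta> where "\<beta> = Inf S"
  have b1: "tm \<le> \<beta>" "\<beta> \<le> 0" "a \<beta> \<le> 0" using bS unfolding S_def \<beta>_def by auto
  have b2: "tm < \<beta>" using b1 atm by (auto simp: le_less)
  have pos: "a t > 0" if "tm \<le> t" "t < \<beta>" for t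
  proof (rule ccontr)
    assume "\<not> a t > 0"
    hence "t \<in> S" using that b1 unfolding S_def by auto
    hence "\<beta> \<le> t" unfolding \<beta>_def using \<open>bdd_below S\<close> by (rule cInf_lower)
    thus False using that by simp
  qed
  have pp: "ad t + d t * a t \<ge> 0" if "tm < t" "t < \<beta>" for t
  proof -
    from mvt_h[OF \<open>tm < t\<close> _ dp] that b1 tm obtain \<xi> where
      "\<xi> \<in> {tm<..<t}" "(ad t + d t * a t) - (ad tm + d tm * a tm) = k \<xi> * a \<xi> * (t - tm)"
      by auto
    moreover have "\<xi> \<in> {-T..0}" using \<open>\<xi> \<in> _\<close> tm that b1 by auto
    moreover have "k \<xi> * a \<xi> * (t - tm) \<ge> 0"
    proof -
      have "k \<xi> > 0" using k \<open>\<xi> \<in> {-T..0}\<close> by blast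
      moreover have "a \<xi> > 0" using pos[of \<xi>] \<open>\<xi> \<in> {tm<..<t}\<close> that by auto
      ultimately show ?thesis using that by simp
    qed
    ultimately show ?thesis using ptm by linarith
  qed
  have dg: "\<forall>t\<in>{-T..0}. ((\<lambda>t. a t * exp (M * t)) has_field_derivative
      (ad t * exp (M * t) + (exp (M * t) * M) * a t)) (at t within {-T..0})"
  proof
    fix t assume "t \<in> {-T..0}"
    have "((\<lambda>t. exp (M * t)) has_field_derivative exp (M * t) * M) (at t within {-T..0})"
      by (auto intro!: derivative_eq_intros)
    thus "((\<lambda>t. a t * exp (M * t)) has_field_derivative
      (ad t * exp (M * t) + (exp (M * t) * M) * a t)) (at t within {-T..0})"
      using da \<open>t \<in> _\<close> by (auto intro: DERIV_mult)
  qed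
  from mvt_h[OF b2 _ dg] b1 tm obtain \<xi> where xi: "\<xi> \<in> {tm<..<\<beta>}"
    "a \<beta> * exp (M * \<beta>) - a tm * exp (M * tm) = (ad \<xi> * exp (M * \<xi>) + (exp (M * \<xi>) * M) * a \<xi>) * (\<beta> - tm)"
    by auto
  have "ad \<xi> + M * a \<xi> \<ge> ad \<xi> + d \<xi> * a \<xi>" using d pos[of \<xi>] xi tm b1
    by (intro add_left_mono mult_right_mono) auto
  with pp[of \<xi>] xi have "ad \<xi> + M * a \<xi> \<ge> 0" by auto
  hence "(ad \<xi> * exp (M * \<xi>) + (exp (M * \<xi>) * M) * a \<xi>) * (\<beta> - tm) \<ge> 0"
  proof -
    have "(ad \<xi> * exp (M * \<xi>) + (exp (M * \<xi>) * M) * a \<xi>) * (\<beta> - tm)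
       = ((ad \<xi> + M * a \<xi>) * exp (M * \<xi>)) * (\<beta> - tm)" by (simp add: algebra_simps)
    also have "\<dots> \<ge> 0" using b2 \<open>ad \<xi> + M * a \<xi> \<ge> 0\<close> by (intro mult_nonneg_nonneg) auto
    finally show ?thesis .
  qed
  moreover have "a tm * exp (M * tm) > 0" using atm by simp
  moreover have "a \<beta> * exp (M * \<beta>) \<le> 0" using b1 by (simp add: mult_nonpos_nonneg)
  ultimately show False using xi by linarith
qed

lemma dinner:
  assumes "(f has_vector_derivative f') F"
  shows "((\<lambda>t. f t \<bullet> v) has_real_derivative (f' \<bullet> v)) F"
  using bounded_linear.has_vector_derivative[OF bounded_linear_inner_left assms]
  unfolding has_real_derivative_iff_has_vector_derivative .

lemma dchain:
  assumes "(D has_derivative (\<lambda>h. h \<bullet> g)) (at (x t))"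
    and "(x has_vector_derivative v) (at t within S)"
  shows "((\<lambda>t. D (x t)) has_real_derivative (v \<bullet> g)) (at t within S)"
proof -
  have "(x has_derivative (\<lambda>h. h *\<^sub>R v)) (at t within S)" using assms(2) by (simp add: has_vector_derivative_def)
  from diff_chain_within[OF this has_derivative_at_withinI[OF assms(1)]]
  have "((D \<circ> x) has_derivative ((\<lambda>h. h \<bullet> g) \<circ> (\<lambda>h. h *\<^sub>R v))) (at t within S)" .
  moreover have "((\<lambda>h. h \<bullet> g) \<circ> (\<lambda>h. h *\<^sub>R v)) = (*) (v \<bullet> g)" by (auto simp: fun_eq_iff)
  ultimately show ?thesis by (simp add: has_field_derivative_def o_def)
qed

lemma vec2:
  fixes w0 :: "real^2"
  assumes "norm w0 = 1"
  defines "n \<equiv> vector [- w0$2, w0$1] :: real^2"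
  shows "n \<bullet> w0 = 0" "w0 \<bullet> n = 0" "w0 \<bullet> w0 = 1" "n \<bullet> n = 1"
    "\<And>v. v = (v \<bullet> w0) *\<^sub>R w0 + (v \<bullet> n) *\<^sub>R n"
proof -
  have "w0 \<bullet> w0 = 1" using assms(1) by (simp add: dot_square_norm)
  hence e: "w0$1 * w0$1 + w0$2 * w0$2 = 1" by (simp add: inner_vec_def sum_2)
  show "n \<bullet> w0 = 0" "w0 \<bullet> n = 0" "w0 \<bullet> w0 = 1" "n \<bullet> n = 1"
    using e \<open>w0 \<bullet> w0 = 1\<close> by (auto simp: n_def inner_vec_def sum_2 algebra_simps)
  fix v :: "real^2"
  show "v = (v \<bullet> w0) *\<^sub>R w0 + (v \<bullet> n) *\<^sub>R n"
  proof -
    have "v$1 = (v$1 * w0$1 + v$2 * w0$2) * w0$1 + (- v$1 * w0$2 + v$2 * w0$1) * (- w0$2)"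
      using e by algebra
    moreover have "v$2 = (v$1 * w0$1 + v$2 * w0$2) * w0$2 + (- v$1 * w0$2 + v$2 * w0$1) * (w0$1)"
      using e by algebra
    ultimately show ?thesis
      by (simp add: vec_eq_iff forall_2 n_def inner_vec_def sum_2 algebra_simps)
  qed
qed

theorem lemma3p4:
  fixes D :: "real^2 \<Rightarrow> real" and gradD :: "real^2 \<Rightarrow> real^2"
    and T :: real and x x' x'' :: "real \<Rightarrow> real^2"
  assumes D_nonneg: "\<forall>y. y \<noteq> 0 \<longrightarrow> D y \<ge> 0"
    and D_bounded: "bounded (D ` (- {0}))"
    and D_grad: "\<forall>y. y \<noteq> 0 \<longrightarrow> GDERIV D y :> gradD y"
    and gradD_cont: "continuous_on (- {0}) gradD"
    and T_pos: "T > 0"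
    and sol: "kepler_solution D T x x' x''"
    and rect: "rectilinear T x"
  shows "nondegenerate D gradD T x x'"
  unfolding nondegenerate_def
proof (intro allI impI)
  fix w w' w'' :: "real \<Rightarrow> real^2"
  assume H: "(\<forall>t\<in>{-T..0}.
           (w has_vector_derivative w' t) (at t within {-T..0}) \<and>
           (w' has_vector_derivative w'' t) (at t within {-T..0}) \<and>
           w'' t + (gradD (x t) \<bullet> w t) *\<^sub>R x' t + D (x t) *\<^sub>R w' t
             = - (1 / norm (x t) ^ 3) *\<^sub>R w t
               + (3 * (x t \<bullet> w t) / norm (x t) ^ 5) *\<^sub>R x t)
        \<and> w (-T) = 0 \<and> w 0 = 0"
  define I where "I = {-T..0}"
  obtain w0 r where w0: "norm w0 = 1" and r: "\<forall>t\<in>I. r t > 0 \<and> x t = r t *\<^sub>R w0"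
    using rect unfolding rectilinear_def I_def by blast
  define n :: "real^2" where "n = vector [- w0$2, w0$1]"
  note V = vec2[OF w0, folded n_def]
  have S: "\<forall>t\<in>I. x t \<noteq> 0 \<and> (x has_vector_derivative x' t) (at t within I) \<and>
        (x' has_vector_derivative x'' t) (at t within I) \<and>
        x'' t + D (x t) *\<^sub>R x' t = - (1 / norm (x t) ^ 3) *\<^sub>R x t"
    using sol unfolding kepler_solution_def I_def by blast
  define \<rho> where "\<rho> t = x t \<bullet> w0" for t
  define \<rho>1 where "\<rho>1 t = x' t \<bullet> w0" for t
  define \<rho>2 where "\<rho>2 t = x'' t \<bullet> w0" for t
  define \<delta> where "\<delta> t = D (x t)" for t
  have xr: "x t = \<rho> t *\<^sub>R w0" "\<rho> t > 0" if "t \<in> I" for t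
    using r that V by (auto simp: \<rho>_def)
  have nx: "norm (x t) = \<rho> t" if "t \<in> I" for t using xr[OF that] w0 by simp
  have xn: "x t \<bullet> n = 0" if "t \<in> I" for t using xr[OF that] V by simp
  have Tl: "-T < (0::real)" using T_pos by simp
  have x'n: "x' t \<bullet> n = 0" if "t \<in> I" for t
  proof -
    have "((\<lambda>t. x t \<bullet> n) has_real_derivative (x' t \<bullet> n)) (at t within I)"
      using dinner S that by blast
    hence "((\<lambda>t. 0) has_real_derivative (x' t \<bullet> n)) (at t within I)"
      by (rule has_field_derivative_transform_within[where d=1]) (use that xn in auto)
    moreover have "((\<lambda>t. 0) has_real_derivative 0) (at t within I)" by simp
    ultimately show ?thesis
      using vector_derivative_unique_within_closed_interval[OF Tl, of t "\<lambda>t. 0" "x' t \<bullet> n" 0]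
        that unfolding I_def has_real_derivative_iff_has_vector_derivative by simp
  qed
  have x'r: "x' t = \<rho>1 t *\<^sub>R w0" if "t \<in> I" for t
    using V(5)[of "x' t"] x'n[OF that] by (simp add: \<rho>1_def)
  have d\<rho>: "(\<rho> has_real_derivative \<rho>1 t) (at t within I)" if "t \<in> I" for t
    unfolding \<rho>_def[abs_def] \<rho>1_def using dinner S that by blast
  have d\<rho>1: "(\<rho>1 has_real_derivative \<rho>2 t) (at t within I)" if "t \<in> I" for t
    unfolding \<rho>1_def[abs_def] \<rho>2_def using dinner S that by blast
  have kep: "\<rho>2 t + \<delta> t * \<rho>1 t = - (1 / \<rho> t ^ 3) * \<rho> t" if "t \<in> I" for t
  proof -
    have "(x'' t + D (x t) *\<^sub>R x' t) \<bullet> w0 = (- (1 / norm (x t) ^ 3) *\<^sub>R x t) \<bullet> w0"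
      using S that by metis
    thus ?thesis using nx[OF that] by (simp add: \<rho>_def \<rho>1_def \<rho>2_def \<delta>_def inner_add_left)
  qed
  obtain B where B: "\<forall>y\<in>D ` (- {0}). norm y \<le> B" using D_bounded bounded_iff by metis
  have \<delta>b: "0 \<le> \<delta> t \<and> \<delta> t \<le> B" if "t \<in> I" for t
    using B D_nonneg S that unfolding \<delta>_def by fastforce
  have W: "(w has_vector_derivative w' t) (at t within I) \<and>
           (w' has_vector_derivative w'' t) (at t within I) \<and>
           w'' t + (gradD (x t) \<bullet> w t) *\<^sub>R x' t + D (x t) *\<^sub>R w' t
             = - (1 / norm (x t) ^ 3) *\<^sub>R w t
               + (3 * (x t \<bullet> w t) / norm (x t) ^ 5) *\<^sub>R x t" if "t \<in> I" for t
    using H that unfolding I_def by blast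
  have w0T: "w (-T) = 0" "w 0 = 0" using H by auto
  have T0: "-T \<in> I" "0 \<in> I" using T_pos unfolding I_def by auto
  define b where "b t = w t \<bullet> n" for t
  define b1 where "b1 t = w' t \<bullet> n" for t
  define b2 where "b2 t = w'' t \<bullet> n" for t
  have db: "(b has_real_derivative b1 t) (at t within I)" if "t \<in> I" for t
    unfolding b_def[abs_def] b1_def using dinner W that by blast
  have db1: "(b1 has_real_derivative b2 t) (at t within I)" if "t \<in> I" for t
    unfolding b1_def[abs_def] b2_def using dinner W that by blast
  have beq: "b2 t + \<delta> t * b1 t = - (1 / \<rho> t ^ 3) * b t" if "t \<in> I" for t
  proof -
    have "(w'' t + (gradD (x t) \<bullet> w t) *\<^sub>R x' t + D (x t) *\<^sub>R w' t) \<bullet> n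
       = (- (1 / norm (x t) ^ 3) *\<^sub>R w t + (3 * (x t \<bullet> w t) / norm (x t) ^ 5) *\<^sub>R x t) \<bullet> n"
      using W[OF that] by metis
    thus ?thesis using nx[OF that] xn[OF that] x'n[OF that]
      by (simp add: b_def b1_def b2_def \<delta>_def inner_add_left inner_diff_left)
  qed
  define c where "c t = b t / \<rho> t" for t
  define q where "q t = b1 t * \<rho> t - b t * \<rho>1 t" for t
  define c1 where "c1 t = q t / (\<rho> t * \<rho> t)" for t
  have dc: "(c has_real_derivative c1 t) (at t within I)" if "t \<in> I" for t
    unfolding c_def[abs_def] c1_def q_def
    by (rule DERIV_divide[OF db[OF that] d\<rho>[OF that]]) (use xr[OF that] in simp)
  have dq: "(q has_real_derivative - \<delta> t * q t) (at t within I)" if "t \<in> I" for t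
  proof -
    have "(q has_real_derivative (b2 t * \<rho> t + \<rho>1 t * b1 t) - (b1 t * \<rho>1 t + \<rho>2 t * b t)) (at t within I)"
      unfolding q_def[abs_def]
      by (intro DERIV_diff DERIV_mult db db1 d\<rho> d\<rho>1 that)
    moreover have "(b2 t * \<rho> t + \<rho>1 t * b1 t) - (b1 t * \<rho>1 t + \<rho>2 t * b t) = - \<delta> t * q t"
    proof -
      have e1: "b2 t = - \<delta> t * b1 t - (1 / \<rho> t ^ 3) * b t" and e2: "\<rho>2 t = - \<delta> t * \<rho>1 t - (1 / \<rho> t ^ 3) * \<rho> t"
        using beq[OF that] kep[OF that] by algebra+
      have "\<rho> t \<noteq> 0" using xr[OF that] by simp
      then show ?thesis unfolding e1 e2 q_def by (simp add: field_simps power3_eq_cube)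
    qed
    ultimately show ?thesis by simp
  qed
  have c0: "c (-T) = 0" "c 0 = 0" using w0T by (auto simp: c_def b_def)
  have qs: "\<forall>t\<in>{-T..0}. q t = \<rho> t * \<rho> t * c1 t"
  proof
    fix t assume "t \<in> {-T..0}"
    hence "\<rho> t > 0" using xr unfolding I_def by blast
    thus "q t = \<rho> t * \<rho> t * c1 t" by (simp add: c1_def)
  qed
  have sp: "\<forall>t\<in>{-T..0}. \<rho> t * \<rho> t > 0" using xr unfolding I_def by auto
  have cle: "\<forall>t\<in>{-T..0}. c t \<le> 0"
    by (rule lemB[OF T_pos, where cd=c1 and q=q and d=\<delta> and s="\<lambda>t. \<rho> t * \<rho> t"])
       (use dc dq \<delta>b qs sp c0 in \<open>auto simp: I_def\<close>)
  have cge: "\<forall>t\<in>{-T..0}. - c t \<le> 0"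
  proof (rule lemB[OF T_pos, where cd="\<lambda>t. - c1 t" and q="\<lambda>t. - q t" and d=\<delta> and s="\<lambda>t. \<rho> t * \<rho> t"])
    show "\<forall>t\<in>{-T..0}. ((\<lambda>t. - c t) has_real_derivative - c1 t) (at t within {-T..0})"
      using dc unfolding I_def by (auto intro: DERIV_minus)
    show "\<forall>t\<in>{-T..0}. ((\<lambda>t. - q t) has_real_derivative - \<delta> t * - q t) (at t within {-T..0})"
      using DERIV_minus[OF dq] unfolding I_def by auto
  qed (use \<delta>b qs sp c0 in \<open>auto simp: I_def\<close>)
  have b0: "b t = 0" if "t \<in> I" for t
  proof -
    have "c t = 0" using cle cge that unfolding I_def by force
    thus ?thesis using xr[OF that] by (simp add: c_def)
  qed
  define a where "a t = w t \<bullet> w0" for t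
  define a1 where "a1 t = w' t \<bullet> w0" for t
  define a2 where "a2 t = w'' t \<bullet> w0" for t
  define g where "g t = gradD (x t) \<bullet> w0" for t
  have wa: "w t = a t *\<^sub>R w0" if "t \<in> I" for t
    using V(5)[of "w t"] b0[OF that] by (simp add: a_def b_def)
  have da: "(a has_real_derivative a1 t) (at t within I)" if "t \<in> I" for t
    unfolding a_def[abs_def] a1_def using dinner W that by blast
  have da1: "(a1 has_real_derivative a2 t) (at t within I)" if "t \<in> I" for t
    unfolding a1_def[abs_def] a2_def using dinner W that by blast
  have d\<delta>: "(\<delta> has_real_derivative \<rho>1 t * g t) (at t within I)" if "t \<in> I" for t
  proof -
    have "(D has_derivative (\<lambda>h. h \<bullet> gradD (x t))) (at (x t))"
      using D_grad S that by (simp add: gderiv_def)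
    from dchain[where x=x and t=t and v="x' t" and S=I, OF this] S that
    have "(\<delta> has_real_derivative (x' t \<bullet> gradD (x t))) (at t within I)"
      unfolding \<delta>_def[abs_def] by blast
    moreover have "x' t \<bullet> gradD (x t) = \<rho>1 t * g t"
      using x'r[OF that] by (simp add: g_def inner_commute)
    ultimately show ?thesis by simp
  qed
  have aeq: "a2 t + \<rho>1 t * g t * a t + \<delta> t * a1 t = 2 / \<rho> t ^ 3 * a t" if "t \<in> I" for t
  proof -
    have "(w'' t + (gradD (x t) \<bullet> w t) *\<^sub>R x' t + D (x t) *\<^sub>R w' t) \<bullet> w0
       = (- (1 / norm (x t) ^ 3) *\<^sub>R w t + (3 * (x t \<bullet> w t) / norm (x t) ^ 5) *\<^sub>R x t) \<bullet> w0"
      using W[OF that] by metis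
    moreover have "gradD (x t) \<bullet> w t = a t * g t" using wa[OF that] by (simp add: g_def)
    moreover have "x t \<bullet> w t = \<rho> t * a t" using wa[OF that] xr[OF that] V by simp
    moreover have "\<rho> t \<noteq> 0" using xr[OF that] by simp
    moreover have "x t \<bullet> w0 = \<rho> t" by (simp add: \<rho>_def)
    ultimately have e1: "a2 t + (a t * g t) * \<rho>1 t + \<delta> t * a1 t
        = - (1 / \<rho> t ^ 3) * a t + (3 * (\<rho> t * a t) / \<rho> t ^ 5) * \<rho> t"
      using nx[OF that]
      by (simp add: a_def a1_def a2_def \<rho>1_def \<delta>_def inner_add_left inner_diff_left)
    have e2: "- (1 / \<rho> t ^ 3) * a t + (3 * (\<rho> t * a t) / \<rho> t ^ 5) * \<rho> t = 2 / \<rho> t ^ 3 * a t"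
      using \<open>\<rho> t \<noteq> 0\<close> by (simp add: field_simps eval_nat_numeral)
    have "a2 t + \<rho>1 t * g t * a t + \<delta> t * a1 t = a2 t + (a t * g t) * \<rho>1 t + \<delta> t * a1 t"
      by (simp add: algebra_simps)
    also note e1
    also note e2
    finally show ?thesis .
  qed
  have dp: "((\<lambda>t. a1 t + \<delta> t * a t) has_real_derivative 2 / \<rho> t ^ 3 * a t) (at t within I)"
    if "t \<in> I" for t
  proof -
    have "((\<lambda>t. a1 t + \<delta> t * a t) has_real_derivative a2 t + (\<rho>1 t * g t * a t + a1 t * \<delta> t)) (at t within I)"
      by (intro DERIV_add DERIV_mult da da1 d\<delta> that)
    thus ?thesis using aeq[OF that] by (simp add: algebra_simps)
  qed
  have a0: "a (-T) = 0" "a 0 = 0" using w0T by (auto simp: a_def)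
  have kp: "\<forall>t\<in>{-T..0}. 2 / \<rho> t ^ 3 > 0" using xr unfolding I_def by auto
  have dB: "\<forall>t\<in>{-T..0}. 0 \<le> \<delta> t \<and> \<delta> t \<le> B" using \<delta>b unfolding I_def by auto
  have ale: "\<forall>t\<in>{-T..0}. a t \<le> 0"
    by (rule lemA[OF T_pos, where ad=a1 and d=\<delta> and k="\<lambda>t. 2 / \<rho> t ^ 3" and M=B])
       (use da dp dB kp a0 in \<open>auto simp: I_def\<close>)
  have age: "\<forall>t\<in>{-T..0}. - a t \<le> 0"
  proof (rule lemA[OF T_pos, where ad="\<lambda>t. - a1 t" and d=\<delta> and k="\<lambda>t. 2 / \<rho> t ^ 3" and M=B])
    show "\<forall>t\<in>{-T..0}. ((\<lambda>t. - a t) has_real_derivative - a1 t) (at t within {-T..0})"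
      using da unfolding I_def by (auto intro: DERIV_minus)
    show "\<forall>t\<in>{-T..0}. ((\<lambda>t. - a1 t + \<delta> t * - a t) has_real_derivative 2 / \<rho> t ^ 3 * - a t) (at t within {-T..0})"
    proof
      fix t assume "t \<in> {-T..0}"
      from DERIV_minus[OF dp[of t]] this
      have "((\<lambda>t. - (a1 t + \<delta> t * a t)) has_real_derivative - (2 / \<rho> t ^ 3 * a t)) (at t within {-T..0})"
        unfolding I_def by simp
      thus "((\<lambda>t. - a1 t + \<delta> t * - a t) has_real_derivative 2 / \<rho> t ^ 3 * - a t) (at t within {-T..0})"
        by (simp add: algebra_simps)
    qed
  qed (use dB kp a0 in auto)
  show "\<forall>t\<in>{-T..0}. w t = 0"
  proof
    fix t assume "t \<in> {-T..0}"
    hence "a t = 0" "b t = 0" using ale age b0 unfolding I_def by force+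
    thus "w t = 0" using V(5)[of "w t"] by (simp add: a_def b_def)
  qed
qed

end
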